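(* Let $V,W$ be finite-dimensional real vector spaces, let $\rho\colon\mathrm{GL}(V)\to\mathrm{GL}(W)$ be a representation, and let $\mathcal{R}=(\mathcal{R}^0,\mathcal{R}^1,\dots)$ be a sequence in $\mathscr{P}(V;W)$ whose minimal polynomial $P_{\min}(\mathcal{R})$ has degree $k$. If $\mathrm{Kern}(\mathrm{Eval}_{\mathcal{R}})$ is an ideal of $\mathscr{P}(V)[\lambda]$, then $G(\mathcal{R}^{\le k})=G(\mathcal{R}^{\le k+1})$.
   Context: $\mathscr{P}(V)$ and $\mathscr{P}(V;W)$ denote the real-valued and $W$-valued polynomial functions on $V$. The degree $k$ of $P_{\min}(\mathcal{R})$ is the smallest integer $k\ge0$ such that $\mathcal{R}^0(X),\dots,\mathcal{R}^k(X)$ are linearly dependent for every $X\in V$. Then $P_{\min}(\mathcal{R})=\lambda^k+\sum_{i=1}^k a_i\lambda^{k-i}$, where $a_i$ are the unique rational functions with $\mathcal{R}^k=-\sum_{i=1}^k a_i\mathcal{R}^{k-i}$. $\mathrm{Eval}_{\mathcal{R}}\colon\mathscr{P}(V)[\lambda]\to\mathscr{P}(V;W)$ is the unique $\mathscr{P}(V)$-module homomorphism with $\lambda^i\mapsto\mathcal{R}^i$. $\mathrm{GL}(V)$ acts on $W$-valued functions by $(F\cdot\mathcal{R}^i)(X)=\rho(F)(\mathcal{R}^i(F^{-1}X))$. For $m\ge0$, $G(\mathcal{R}^{\le m})=\{F\in\mathrm{GL}(V): F\cdot\mathcal{R}^i=\mathcal{R}^i\text{ for }i=0,\dots,m\}$.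 *)

theory Defs
  imports "HOL-Analysis.Analysis" "HOL-Computational_Algebra.Polynomial" "HOL-Library.Function_Algebras"
begin

inductive_set polyfun :: "('v::euclidean_space \<Rightarrow> real) set" where
  const: "(\<lambda>x. c) \<in> polyfun"
| lin: "linear f \<Longrightarrow> f \<in> polyfun"
| add: "f \<in> polyfun \<Longrightarrow> g \<in> polyfun \<Longrightarrow> (\<lambda>x. f x + g x) \<in> polyfun"
| mult: "f \<in> polyfun \<Longrightarrow> g \<in> polyfun \<Longrightarrow> (\<lambda>x. f x * g x) \<in> polyfun"

definition vpolyfun :: "('v::euclidean_space \<Rightarrow> 'w::euclidean_space) set" where
  "vpolyfun = {F. \<forall>b\<in>Basis. (\<lambda>x. F x \<bullet> b) \<in> polyfun}"

text \<open>The ring P(V)[lambda]: polynomials in lambda with coefficients in P(V).\<close>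
definition polyring :: "('v::euclidean_space \<Rightarrow> real) poly set" where
  "polyring = {p. \<forall>i. coeff p i \<in> polyfun}"

definition Eval :: "(nat \<Rightarrow> 'v::euclidean_space \<Rightarrow> 'w::euclidean_space) \<Rightarrow> ('v \<Rightarrow> real) poly \<Rightarrow> 'v \<Rightarrow> 'w" where
  "Eval R p = (\<lambda>X. \<Sum>i\<le>degree p. coeff p i X *\<^sub>R R i X)"

definition Kern :: "(nat \<Rightarrow> 'v::euclidean_space \<Rightarrow> 'w::euclidean_space) \<Rightarrow> ('v \<Rightarrow> real) poly set" where
  "Kern R = {p \<in> polyring. Eval R p = (\<lambda>X. 0)}"

definition is_ideal_of_polyring :: "('v::euclidean_space \<Rightarrow> real) poly set \<Rightarrow> bool" where
  "is_ideal_of_polyring I \<longleftrightarrow> I \<subseteq> polyring \<and> 0 \<in> I \<and>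
     (\<forall>p\<in>I. \<forall>q\<in>I. p + q \<in> I) \<and> (\<forall>a\<in>polyring. \<forall>p\<in>I. a * p \<in> I)"

definition dep_upto :: "(nat \<Rightarrow> 'v::euclidean_space \<Rightarrow> 'w::euclidean_space) \<Rightarrow> nat \<Rightarrow> bool" where
  "dep_upto R k \<longleftrightarrow> (\<forall>X. \<exists>c::nat \<Rightarrow> real. (\<exists>i\<le>k. c i \<noteq> 0) \<and> (\<Sum>i\<le>k. c i *\<^sub>R R i X) = 0)"

text \<open>deg P_min(R) = k: k is the least such integer.\<close>
definition minpoly_degree :: "(nat \<Rightarrow> 'v::euclidean_space \<Rightarrow> 'w::euclidean_space) \<Rightarrow> nat \<Rightarrow> bool" where
  "minpoly_degree R k \<longleftrightarrow> dep_upto R k \<and> (\<forall>j<k. \<not> dep_upto R j)"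

definition GL :: "('a::real_vector \<Rightarrow> 'a) set" where
  "GL = {F. linear F \<and> bij F}"

definition is_rep :: "(('v::euclidean_space \<Rightarrow> 'v) \<Rightarrow> ('w::euclidean_space \<Rightarrow> 'w)) \<Rightarrow> bool" where
  "is_rep \<rho> \<longleftrightarrow> (\<forall>F\<in>GL. \<rho> F \<in> GL) \<and> (\<forall>F\<in>GL. \<forall>G\<in>GL. \<rho> (F \<circ> G) = \<rho> F \<circ> \<rho> G)"

text \<open>Stabilizer G(R^{<=m}) of R^0..R^m under (F.R^i)(X) = rho(F)(R^i(F^{-1} X)).\<close>
definition stab :: "(('v::euclidean_space \<Rightarrow> 'v) \<Rightarrow> ('w::euclidean_space \<Rightarrow> 'w)) \<Rightarrow> (nat \<Rightarrow> 'v \<Rightarrow> 'w) \<Rightarrow> nat \<Rightarrow> ('v \<Rightarrow> 'v) set" where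
  "stab \<rho> R m = {F \<in> GL. \<forall>i\<le>m. (\<lambda>X. \<rho> F (R i (inv F X))) = R i}"

end

theory Submission imports Defs "Jordan_Normal_Form.Determinant" begin
no_notation Matrix.scalar_prod (infix "\<bullet>" 70)
no_notation Matrix.vec_index (infixl "$" 100)

lemma polyfun_zero: "(\<lambda>x. 0) \<in> polyfun" by (rule polyfun.const)

lemma polyfun_sum: "(\<And>i. i \<in> S \<Longrightarrow> f i \<in> polyfun) \<Longrightarrow> (\<lambda>x. \<Sum>i\<in>S. f i x) \<in> polyfun"
proof (induction S rule: infinite_finite_induct)
  case (infinite A) then show ?case by (simp add: polyfun.const)
next
  case empty then show ?case by (simp add: polyfun.const)
next
  case (insert a A) then show ?case by (simp add: polyfun.add)
qed

lemma polyfun_prod: "(\<And>i. i \<in> S \<Longrightarrow> f i \<in> polyfun) \<Longrightarrow> (\<lambda>x. \<Prod>i\<in>S. f i x) \<in> polyfun"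
proof (induction S rule: infinite_finite_induct)
  case (infinite A) then show ?case by (simp add: polyfun.const)
next
  case empty then show ?case by (simp add: polyfun.const)
next
  case (insert a A) then show ?case by (simp add: polyfun.mult)
qed

lemma polyfun_cmult: "f \<in> polyfun \<Longrightarrow> (\<lambda>x. c * f x) \<in> polyfun"
  using polyfun.mult[OF polyfun.const] by blast

lemma polyfun_diff: "f \<in> polyfun \<Longrightarrow> g \<in> polyfun \<Longrightarrow> (\<lambda>x. f x - g x) \<in> polyfun"
  using polyfun.add[OF _ polyfun_cmult[of g "-1"]] by simp

lemma polyfun_comp_linear: "f \<in> polyfun \<Longrightarrow> linear G \<Longrightarrow> (\<lambda>x. f (G x)) \<in> polyfun"
proof (induction f rule: polyfun.induct)
  case (const c) show ?case by (rule polyfun.const)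
next
  case (lin f) then show ?case using linear_compose[of G f] polyfun.lin by (simp add: o_def)
next
  case (add f g) then show ?case by (simp add: polyfun.add)
next
  case (mult f g) then show ?case by (simp add: polyfun.mult)
qed

lemma polyfun_line: "f \<in> polyfun \<Longrightarrow> \<exists>P. \<forall>t. f (a + t *\<^sub>R v) = poly P t"
proof (induction f rule: polyfun.induct)
  case (const c) then show ?case by (intro exI[of _ "[:c:]"]) simp
next
  case (lin f) then show ?case
    by (intro exI[of _ "[:f a, f v:]"]) (simp add: linear_add linear_scale)
next
  case (add f g) then obtain P Q where "\<forall>t. f (a + t *\<^sub>R v) = poly P t" "\<forall>t. g (a + t *\<^sub>R v) = poly Q t" by blast
  then show ?case by (intro exI[of _ "P + Q"]) simp
next
  case (mult f g) then obtain P Q where "\<forall>t. f (a + t *\<^sub>R v) = poly P t" "\<forall>t. g (a + t *\<^sub>R v) = poly Q t" by blast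
  then show ?case by (intro exI[of _ "P * Q"]) simp
qed

lemma polyfun_domain:
  assumes f: "f \<in> polyfun" and g: "g \<in> polyfun" and fg: "\<And>x. f x * g x = 0" and Y: "f Y \<noteq> 0"
  shows "g Z = 0"
proof -
  obtain P where P: "\<forall>t. f (Y + t *\<^sub>R (Z - Y)) = poly P t" using polyfun_line[OF f] by blast
  obtain Q where Q: "\<forall>t. g (Y + t *\<^sub>R (Z - Y)) = poly Q t" using polyfun_line[OF g] by blast
  have "\<forall>t. poly (P * Q) t = 0" using P Q fg by (metis poly_mult)
  then have "P * Q = 0" using poly_all_0_iff_0 by blast
  moreover have "P \<noteq> 0" using P[rule_format, of 0] Y by auto
  ultimately have "Q = 0" by simp
  then show ?thesis using Q[rule_format, of 1] by simp
qed

lemma vpolyfun_inner: "R \<in> vpolyfun \<Longrightarrow> (\<lambda>X. R X \<bullet> y) \<in> polyfun"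
proof -
  assume R: "R \<in> vpolyfun"
  have "(\<lambda>X. \<Sum>b\<in>Basis. (y \<bullet> b) * (R X \<bullet> b)) \<in> polyfun"
    by (rule polyfun_sum, rule polyfun_cmult) (use R in \<open>auto simp: vpolyfun_def\<close>)
  moreover have "(\<lambda>X. R X \<bullet> y) = (\<lambda>X. \<Sum>b\<in>Basis. (y \<bullet> b) * (R X \<bullet> b))"
    by (subst euclidean_inner) (simp add: mult.commute)
  ultimately show ?thesis by simp
qed

lemma vpolyfun_lin_inner: fixes H :: "'w::euclidean_space \<Rightarrow> 'u::euclidean_space" shows "R \<in> vpolyfun \<Longrightarrow> linear H \<Longrightarrow> (\<lambda>X. H (R X) \<bullet> y) \<in> polyfun"
  using vpolyfun_inner[of R "adjoint H y"] adjoint_works[of H] by simp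

lemma vpolyfun_inner2: "R \<in> vpolyfun \<Longrightarrow> S \<in> vpolyfun \<Longrightarrow> (\<lambda>X. R X \<bullet> S X) \<in> polyfun"
proof -
  assume R: "R \<in> vpolyfun" and S: "S \<in> vpolyfun"
  have "(\<lambda>X. \<Sum>b\<in>Basis. (R X \<bullet> b) * (S X \<bullet> b)) \<in> polyfun"
    by (rule polyfun_sum, rule polyfun.mult) (use R S in \<open>auto simp: vpolyfun_def\<close>)
  then show ?thesis by (subst euclidean_inner)
qed

lemma polyfun_det:
  assumes "\<And>X. M X \<in> carrier_mat n n" "\<And>i j. i < n \<Longrightarrow> j < n \<Longrightarrow> (\<lambda>X. M X $$ (i,j)) \<in> polyfun"
  shows "(\<lambda>X. Determinant.det (M X)) \<in> polyfun"
proof -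
  have "(\<lambda>X. \<Sum>p\<in>{p. p permutes {0..<n}}. signof p * (\<Prod>i = 0..<n. M X $$ (i, p i))) \<in> polyfun"
  proof (rule polyfun_sum, rule polyfun_cmult, rule polyfun_prod)
    fix p i assume "p \<in> {p. p permutes {0..<n}}" "i \<in> {0..<n}"
    then show "(\<lambda>X. M X $$ (i, p i)) \<in> polyfun" using assms(2) by (auto simp: permutes_in_image)
  qed
  then show ?thesis using det_def'[OF assms(1)] by simp
qed

lemma inv_lin: fixes F :: "'v::euclidean_space \<Rightarrow> 'v" shows "F \<in> GL \<Longrightarrow> linear (Hilbert_Choice.inv F)"
  unfolding GL_def by (metis (mono_tags) mem_Collect_eq bij_is_inj eucl.inj_linear_imp_inv_linear)

lemma kern_elem:
  fixes R :: "nat \<Rightarrow> 'v::euclidean_space \<Rightarrow> 'w::euclidean_space"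
  assumes R: "\<forall>i. R i \<in> vpolyfun" and dep: "dep_upto R k"
    and X0: "\<forall>c. (\<Sum>i<k. c i *\<^sub>R R i X0) = 0 \<longrightarrow> (\<forall>i<k. c i = 0)"
  shows "\<exists>q. (\<forall>j. q j \<in> polyfun) \<and> (\<forall>X. (\<Sum>j\<le>k. q j X *\<^sub>R R j X) = 0) \<and> q k X0 \<noteq> 0"
proof -
  define N :: "'v \<Rightarrow> 'w \<Rightarrow> real mat" where
    "N X b = mat (Suc k) (Suc k) (\<lambda>(i,j). if i < k then R i X \<bullet> R j X else b \<bullet> R j X)" for X b
  define q where "q j X = cofactor (N X 0) k j" for j X
  have Ncar: "N X b \<in> carrier_mat (Suc k) (Suc k)" for X b unfolding N_def by simp
  have del: "mat_delete (N X b) k j = mat_delete (N X 0) k j" for X b j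
    unfolding mat_delete_def N_def by (rule eq_matI) auto
  have qpoly: "q j \<in> polyfun" for j
  proof -
    have "(\<lambda>X. Determinant.det (mat_delete (N X 0) k j)) \<in> polyfun"
    proof (rule polyfun_det)
      show "mat_delete (N X 0) k j \<in> carrier_mat k k" for X using mat_delete_carrier[OF Ncar] by simp
      fix i' j' assume "i' < k" "j' < k"
      then have "(\<lambda>X. mat_delete (N X 0) k j $$ (i', j')) = (\<lambda>X. R i' X \<bullet> R (if j' < j then j' else Suc j') X)"
        unfolding mat_delete_def N_def by auto
      then show "(\<lambda>X. mat_delete (N X 0) k j $$ (i', j')) \<in> polyfun"
        using vpolyfun_inner2 R by auto
    qed
    then show ?thesis unfolding q_def[abs_def] cofactor_def by (rule polyfun_cmult)
  qed
  have eval0: "(\<Sum>j\<le>k. q j X *\<^sub>R R j X) = 0" for X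
  proof -
    obtain c where c: "\<exists>i\<le>k. c i \<noteq> 0" "(\<Sum>i\<le>k. c i *\<^sub>R R i X) = 0"
      using dep unfolding dep_upto_def by blast
    have det0: "Determinant.det (N X b) = 0" for b
    proof -
      let ?v = "vec (Suc k) c"
      have "?v \<noteq> 0\<^sub>v (Suc k)" using c(1) by (metis index_vec index_zero_vec(1) le_imp_less_Suc)
      moreover have "N X b *\<^sub>v ?v = 0\<^sub>v (Suc k)"
      proof (rule eq_vecI)
        fix i assume i: "i < dim_vec (0\<^sub>v (Suc k) :: real vec)"
        have lin: "(\<Sum>j<Suc k. y \<bullet> R j X * c j) = 0" for y
        proof -
          have "(\<Sum>j<Suc k. y \<bullet> R j X * c j) = y \<bullet> (\<Sum>i\<le>k. c i *\<^sub>R R i X)"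
            by (simp add: inner_sum_right lessThan_Suc_atMost mult.commute)
          then show ?thesis using c(2) by simp
        qed
        have "Matrix.vec_index (N X b *\<^sub>v ?v) i = (\<Sum>j<Suc k. N X b $$ (i,j) * c j)"
          using i unfolding N_def by (simp add: mult_mat_vec_def scalar_prod_def atLeast0LessThan)
        also have "\<dots> = 0" using i lin unfolding N_def by (cases "i < k") auto
        finally show "Matrix.vec_index (N X b *\<^sub>v ?v) i = Matrix.vec_index (0\<^sub>v (Suc k)) i" using i by simp
      qed (simp add: N_def)
      ultimately show ?thesis using det_0_iff_vec_prod_zero[OF Ncar] by (meson vec_carrier)
    qed
    let ?s = "\<Sum>j\<le>k. q j X *\<^sub>R R j X"
    have "?s \<bullet> ?s = 0"
    proof -
      have "Determinant.det (N X ?s) = (\<Sum>j<Suc k. N X ?s $$ (k,j) * cofactor (N X ?s) k j)"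
        by (rule laplace_expansion_row[OF Ncar]) simp
      also have "\<dots> = (\<Sum>j<Suc k. (?s \<bullet> R j X) * q j X)"
      proof (rule sum.cong[OF refl])
        fix j assume j: "j \<in> {..<Suc k}"
        have e1: "N X ?s $$ (k,j) = ?s \<bullet> R j X" using j unfolding N_def by simp
        have e2: "cofactor (N X ?s) k j = q j X" unfolding cofactor_def q_def[of j X] using del[of X ?s j] by (rule arg_cong)
        show "N X ?s $$ (k,j) * cofactor (N X ?s) k j = (?s \<bullet> R j X) * q j X" by (simp only: e1 e2)
      qed
      also have "\<dots> = ?s \<bullet> ?s"
        by (simp add: inner_sum_right lessThan_Suc_atMost mult.commute)
      finally show ?thesis using det0 by simp
    qed
    then show ?thesis by simp
  qed
  have "q k X0 \<noteq> 0"
  proof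
    assume "q k X0 = 0"
    moreover have "mat_delete (N X0 0) k k = mat k k (\<lambda>(i,j). R i X0 \<bullet> R j X0)"
      unfolding mat_delete_def N_def by (rule eq_matI) auto
    ultimately have "Determinant.det (mat k k (\<lambda>(i,j). R i X0 \<bullet> R j X0)) = 0"
      unfolding q_def cofactor_def by simp
    then obtain v where v: "v \<in> carrier_vec k" "v \<noteq> 0\<^sub>v k"
      "mat k k (\<lambda>(i,j). R i X0 \<bullet> R j X0) *\<^sub>v v = 0\<^sub>v k"
      using det_0_iff_vec_prod_zero[of _ k] by (meson mat_carrier)
    let ?s = "\<Sum>j<k. Matrix.vec_index v j *\<^sub>R R j X0"
    have comp: "(\<Sum>j<k. (R i X0 \<bullet> R j X0) * Matrix.vec_index v j) = 0" if "i < k" for i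
    proof -
      have "Matrix.vec_index (mat k k (\<lambda>(i,j). R i X0 \<bullet> R j X0) *\<^sub>v v) i = 0"
        using v(3) that by simp
      then show ?thesis using that v(1) by (simp add: mult_mat_vec_def scalar_prod_def atLeast0LessThan mult.commute)
    qed
    have "?s \<bullet> ?s = (\<Sum>i<k. Matrix.vec_index v i * (R i X0 \<bullet> ?s))"
      by (simp add: inner_sum_left)
    also have "\<dots> = (\<Sum>i<k. Matrix.vec_index v i * (\<Sum>j<k. (R i X0 \<bullet> R j X0) * Matrix.vec_index v j))"
      by (simp add: inner_sum_right mult.commute)
    also have "\<dots> = 0" using comp by simp
    finally have "?s = 0" by simp
    then have "\<forall>i<k. Matrix.vec_index v i = 0" using X0 by blast
    then have "v = 0\<^sub>v k" using v(1) by (intro eq_vecI) auto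
    then show False using v(2) by simp
  qed
  then show ?thesis using qpoly eval0 by blast
qed

definition pk :: "(nat \<Rightarrow> 'v \<Rightarrow> real) \<Rightarrow> nat \<Rightarrow> ('v \<Rightarrow> real) poly" where
  "pk c n = (\<Sum>j\<le>n. monom (c j) j)"

lemma coeff_pk: "coeff (pk c n) i = (if i \<le> n then c i else 0)"
  by (simp add: pk_def coeff_sum coeff_monom)

lemma degree_pk: "degree (pk c n) \<le> n"
  by (rule degree_le) (simp add: coeff_pk)

lemma Eval_le: "degree p \<le> N \<Longrightarrow> Eval R p X = (\<Sum>i\<le>N. coeff p i X *\<^sub>R R i X)"
  unfolding Eval_def
  by (rule sum.mono_neutral_left) (auto simp: coeff_eq_0)

lemma Eval_pk: "Eval R (pk c n) X = (\<Sum>i\<le>n. c i X *\<^sub>R R i X)"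
  by (simp add: Eval_le[OF degree_pk] coeff_pk)

lemma pk_polyring: "(\<And>j. c j \<in> polyfun) \<Longrightarrow> pk c n \<in> polyring"
  unfolding polyring_def by (auto simp: coeff_pk zero_fun_def polyfun.const)

lemma lam_mult: "[:0, 1:] * (p :: ('v \<Rightarrow> real) poly) = pCons 0 p"
  by (simp only: mult_pCons_left mult_zero_left smult_0_left smult_1_left add_0_left) simp

lemma lam_polyring: "([:0, 1:] :: ('v::euclidean_space \<Rightarrow> real) poly) \<in> polyring"
  unfolding polyring_def
proof (intro allI CollectI)
  fix i show "coeff ([:0, 1:] :: ('v \<Rightarrow> real) poly) i \<in> polyfun"
    by (cases i; cases "i - 1") (auto simp: zero_fun_def one_fun_def polyfun.const)
qed

lemma Eval_shift: "degree p \<le> N \<Longrightarrow> Eval R (pCons 0 p) X = (\<Sum>i\<le>N. coeff p i X *\<^sub>R R (Suc i) X)"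
proof -
  assume d: "degree p \<le> N"
  have "degree (pCons 0 p) \<le> Suc N" using d degree_pCons_le[of 0 p] by linarith
  then have "Eval R (pCons 0 p) X = (\<Sum>i\<le>Suc N. coeff (pCons 0 p) i X *\<^sub>R R i X)" by (rule Eval_le)
  also have "\<dots> = (\<Sum>i\<le>N. coeff p i X *\<^sub>R R (Suc i) X)"
    by (subst sum.atMost_Suc_shift) simp
  finally show ?thesis .
qed

theorem mainTheorem15:
  fixes \<rho> :: "('v::euclidean_space \<Rightarrow> 'v) \<Rightarrow> ('w::euclidean_space \<Rightarrow> 'w)"
    and R :: "nat \<Rightarrow> 'v \<Rightarrow> 'w" and k :: nat
  assumes "is_rep \<rho>"
    and "\<forall>i. R i \<in> vpolyfun"
    and "minpoly_degree R k"
    and "is_ideal_of_polyring (Kern R)"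
  shows "stab \<rho> R k = stab \<rho> R (Suc k)"
proof
  show "stab \<rho> R (Suc k) \<subseteq> stab \<rho> R k" unfolding stab_def by auto
next
  note rep = assms(1) and Rp = assms(2) and md = assms(3) and idl = assms(4)
  show "stab \<rho> R k \<subseteq> stab \<rho> R (Suc k)"
  proof
    fix F assume Fs: "F \<in> stab \<rho> R k"
    then have FGL: "F \<in> GL" unfolding stab_def by blast
    define G where "G = Hilbert_Choice.inv F"
    define H where "H = \<rho> F"
    have linG: "linear G" unfolding G_def using inv_lin[OF FGL] .
    have linH: "linear H" unfolding H_def using rep FGL unfolding is_rep_def GL_def by blast
    have bijF: "bij F" using FGL unfolding GL_def by blast
    have GF: "G (F X) = X" for X unfolding G_def using bijF by (simp add: bij_is_inj)
    have hyp: "H (R i (G X)) = R i X" if "i \<le> k" for i X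
      using Fs that unfolding stab_def H_def G_def by (auto simp: fun_eq_iff)
    obtain X0 where X0: "\<forall>c. (\<Sum>i<k. c i *\<^sub>R R i X0) = 0 \<longrightarrow> (\<forall>i<k. c i = 0)"
    proof (cases k)
      case 0 then show ?thesis using that by simp
    next
      case (Suc m)
      then have "\<not> dep_upto R m" using md unfolding minpoly_degree_def by simp
      then obtain X where "\<forall>c. (\<exists>i\<le>m. c i \<noteq> 0) \<longrightarrow> (\<Sum>i\<le>m. c i *\<^sub>R R i X) \<noteq> 0"
        unfolding dep_upto_def by blast
      then have "\<forall>c. (\<Sum>i<k. c i *\<^sub>R R i X) = 0 \<longrightarrow> (\<forall>i<k. c i = 0)"
        using Suc by (auto simp: lessThan_Suc_atMost less_Suc_eq_le)
      then show ?thesis using that by blast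
    qed
    have dep: "dep_upto R k" using md unfolding minpoly_degree_def by blast
    obtain q where qp: "\<forall>j. q j \<in> polyfun" and q0: "\<forall>X. (\<Sum>j\<le>k. q j X *\<^sub>R R j X) = 0"
      and qk: "q k X0 \<noteq> 0"
      using kern_elem[OF Rp dep X0] by blast
    define q' where "q' j X = q j (G X)" for j X
    have q'p: "q' j \<in> polyfun" for j unfolding q'_def[abs_def] using qp linG polyfun_comp_linear by blast
    have pK: "pk q k \<in> Kern R"
      unfolding Kern_def using pk_polyring[of q k] qp q0 by (auto simp: Eval_pk fun_eq_iff)
    have p'K: "pk q' k \<in> Kern R"
    proof -
      have "Eval R (pk q' k) X = 0" for X
      proof -
        have "Eval R (pk q' k) X = (\<Sum>j\<le>k. q j (G X) *\<^sub>R H (R j (G X)))"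
          by (simp add: Eval_pk q'_def hyp)
        also have "\<dots> = H (\<Sum>j\<le>k. q j (G X) *\<^sub>R R j (G X))"
          by (simp add: linear_sum[OF linH] linear_scale[OF linH])
        also have "\<dots> = 0" using q0 linear_0[OF linH] by simp
        finally show ?thesis .
      qed
      then show ?thesis unfolding Kern_def using pk_polyring[of q' k] q'p by (auto simp: fun_eq_iff)
    qed
    have mulK: "pCons 0 p \<in> Kern R" if "p \<in> Kern R" for p
      using idl lam_polyring that unfolding is_ideal_of_polyring_def by (metis lam_mult)
    have A: "(\<Sum>j\<le>k. q j (G X) *\<^sub>R R (Suc j) X) = 0" for X
    proof -
      have "Eval R (pCons 0 (pk q' k)) X = 0" using mulK[OF p'K] unfolding Kern_def by simp
      then show ?thesis by (simp add: Eval_shift[OF degree_pk] coeff_pk q'_def)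
    qed
    have B: "(\<Sum>j\<le>k. q j Y *\<^sub>R R (Suc j) Y) = 0" for Y
    proof -
      have "Eval R (pCons 0 (pk q k)) Y = 0" using mulK[OF pK] unfolding Kern_def by simp
      then show ?thesis by (simp add: Eval_shift[OF degree_pk] coeff_pk)
    qed
    have C: "q k (G X) *\<^sub>R (H (R (Suc k) (G X)) - R (Suc k) X) = 0" for X
    proof -
      have "(\<Sum>j\<le>k. q j (G X) *\<^sub>R H (R (Suc j) (G X))) = H (\<Sum>j\<le>k. q j (G X) *\<^sub>R R (Suc j) (G X))"
        by (simp add: linear_sum[OF linH] linear_scale[OF linH])
      also have "\<dots> = 0" using B linear_0[OF linH] by simp
      finally have B': "(\<Sum>j\<le>k. q j (G X) *\<^sub>R H (R (Suc j) (G X))) = 0" .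
      have eq: "(\<Sum>j<k. q j (G X) *\<^sub>R H (R (Suc j) (G X))) = (\<Sum>j<k. q j (G X) *\<^sub>R R (Suc j) X)"
        by (rule sum.cong) (auto simp: hyp Suc_leI)
      have e1: "(\<Sum>j<k. q j (G X) *\<^sub>R H (R (Suc j) (G X))) + q k (G X) *\<^sub>R H (R (Suc k) (G X)) = 0"
        using B' by (simp add: lessThan_Suc_atMost[symmetric])
      have e2: "(\<Sum>j<k. q j (G X) *\<^sub>R R (Suc j) X) + q k (G X) *\<^sub>R R (Suc k) X = 0"
        using A[of X] by (simp add: lessThan_Suc_atMost[symmetric])
      have f1: "q k (G X) *\<^sub>R H (R (Suc k) (G X)) = - (\<Sum>j<k. q j (G X) *\<^sub>R R (Suc j) X)"
        using e1 unfolding eq by (metis add_diff_cancel_left' diff_0)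
      have f2: "q k (G X) *\<^sub>R R (Suc k) X = - (\<Sum>j<k. q j (G X) *\<^sub>R R (Suc j) X)"
        using e2 by (metis add_diff_cancel_left' diff_0)
      show ?thesis unfolding scaleR_diff_right f1 f2 by simp
    qed
    have D: "H (R (Suc k) (G X)) = R (Suc k) X" for X
    proof (rule euclidean_eqI)
      fix b :: 'w assume b: "b \<in> Basis"
      have fp: "(\<lambda>X. q k (G X)) \<in> polyfun" using qp linG polyfun_comp_linear by blast
      have gp: "(\<lambda>X. H (R (Suc k) (G X)) \<bullet> b - R (Suc k) X \<bullet> b) \<in> polyfun"
        by (intro polyfun_diff polyfun_comp_linear[OF _ linG, of "\<lambda>X. H (R (Suc k) X) \<bullet> b"]
            vpolyfun_lin_inner vpolyfun_inner) (use Rp linH in auto)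
      have "q k (G Y) * (H (R (Suc k) (G Y)) \<bullet> b - R (Suc k) Y \<bullet> b) = 0" for Y
        using arg_cong[OF C[of Y], of "\<lambda>v. v \<bullet> b"] by (simp add: inner_diff_left)
      then have "H (R (Suc k) (G X)) \<bullet> b - R (Suc k) X \<bullet> b = 0"
        using polyfun_domain[OF fp gp, of "F X0" X] qk GF by simp
      then show "H (R (Suc k) (G X)) \<bullet> b = R (Suc k) X \<bullet> b" by simp
    qed
    show "F \<in> stab \<rho> R (Suc k)"
      using Fs D unfolding stab_def H_def G_def by (auto simp: fun_eq_iff le_Suc_eq)
  qed
qed

end
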